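(* Let $f=\frac1n\sum_{i=1}^n f_i$ where $f:\mathbb{R}^d\to\mathbb{R}$ has $L$-Lipschitz gradient and infimum $f^{\mathrm{inf}}\in\mathbb{R}$, and each $f_i$ is differentiable, bounded from below by $f_i^{\mathrm{inf}}$, and satisfies $f_i(y)\le f_i(x)+\langle\nabla f_i(x),y-x\rangle+\frac{L_i}{2}\|y-x\|^2$ for all $x,y$. Let $\Delta^{\mathrm{inf}}=\frac1n\sum_{i=1}^n(f^{\mathrm{inf}}-f_i^{\mathrm{inf}})$ and $g(x)=\frac1n\sum_{i=1}^n v_i\nabla f_i(x)$. Then for all $x$, $\mathbb{E}\|g(x)\|^2\le 2A(f(x)-f^{\mathrm{inf}})+B\|\nabla f(x)\|^2+C$ holds with: (i) for sampling with replacement: $A=\max_i\frac{L_i}{\tau n q_i}$, $B=1-\frac1\tau$, $C=2A\Delta^{\mathrm{inf}}$; (ii) for independent sampling without replacement: $A=\max_i\frac{(1-p_i)L_i}{p_i n}$, $B=1$, $C=2A\Delta^{\mathrm{inf}}$; (iii) for $\tau$-nice sampling without replacement (with $n\ge 2$): $A=\frac{n-\tau}{\tau(n-1)}\max_i L_i$, $B=\frac{n(\tau-1)}{\tau(n-1)}$, $C=2A\Delta^{\mathrm{inf}}$.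
   Context: The random vector $v=(v_1,\dots,v_n)$ is generated in one of the following ways. Sampling with replacement: fix an integer $\tau\ge1$ and probabilities $q_1,\dots,q_n>0$ with $\sum_i q_i=1$; roll independently $\tau$ times a die that shows $i$ with probability $q_i$; let $S_i$ be the number of times $i$ shows up, and $v_i=S_i/(\tau q_i)$. Independent sampling without replacement: fix $p_1,\dots,p_n\in(0,1]$; form a random set $S\subseteq\{1,\dots,n\}$ containing each $i$ independently with probability $p_i$; set $v_i=\mathbf{1}_{i\in S}/p_i$. $\tau$-nice sampling without replacement: fix an integer $\tau\in[1,n]$; choose $S$ uniformly among all subsets of $\{1,\dots,n\}$ of size $\tau$; set $v_i=\mathbf{1}_{i\in S}/p_i$ with $p_i=\tau/n$. *)

theory Defs
  imports "HOL-Analysis.Analysis" "HOL-Library.FuncSet"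
begin

text \<open>Indices are 0-based: the functions are f 0, ..., f (n-1).
  The minibatch estimator g(x) = (1/n) sum_i v_i * grad f_i(x), for a fixed
  realisation of the vector v.\<close>

definition minibatch_grad :: "nat \<Rightarrow> (nat \<Rightarrow> real) \<Rightarrow> (nat \<Rightarrow> 'a::real_vector) \<Rightarrow> 'a" where
  "minibatch_grad n v G = (1 / real n) *\<^sub>R (\<Sum>i<n. v i *\<^sub>R G i)"

text \<open>Sampling with replacement: the outcome of tau independent rolls of the die
  is a map s : {..<tau} -> {..<n}, having probability prod_k q (s k).\<close>

definition wr_v :: "nat \<Rightarrow> (nat \<Rightarrow> real) \<Rightarrow> (nat \<Rightarrow> nat) \<Rightarrow> nat \<Rightarrow> real" where
  "wr_v \<tau> q s i = real (card {k\<in>{..<\<tau>}. s k = i}) / (real \<tau> * q i)"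

definition E_sq_with_replacement ::
  "nat \<Rightarrow> nat \<Rightarrow> (nat \<Rightarrow> real) \<Rightarrow> (nat \<Rightarrow> 'a::real_normed_vector) \<Rightarrow> real" where
  "E_sq_with_replacement n \<tau> q G =
     (\<Sum>s\<in>{..<\<tau>} \<rightarrow>\<^sub>E {..<n}. (\<Prod>k<\<tau>. q (s k)) * (norm (minibatch_grad n (wr_v \<tau> q s) G))\<^sup>2)"

definition E_sq_independent ::
  "nat \<Rightarrow> (nat \<Rightarrow> real) \<Rightarrow> (nat \<Rightarrow> 'a::real_normed_vector) \<Rightarrow> real" where
  "E_sq_independent n p G =
     (\<Sum>S\<in>Pow {..<n}. (\<Prod>i<n. if i \<in> S then p i else 1 - p i) *
        (norm (minibatch_grad n (\<lambda>i. (if i \<in> S then 1 else 0) / p i) G))\<^sup>2)"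

definition E_sq_nice ::
  "nat \<Rightarrow> nat \<Rightarrow> (nat \<Rightarrow> 'a::real_normed_vector) \<Rightarrow> real" where
  "E_sq_nice n \<tau> G =
     (\<Sum>S\<in>{S. S \<subseteq> {..<n} \<and> card S = \<tau>}. (1 / real (n choose \<tau>)) *
        (norm (minibatch_grad n (\<lambda>i. (if i \<in> S then 1 else 0) / (real \<tau> / real n)) G))\<^sup>2)"

end

theory Submission
  imports Defs
begin


lemma norm_sq_sum:
  fixes a :: "nat \<Rightarrow> 'a::real_inner"
  shows "(norm (\<Sum>i\<in>I. c i *\<^sub>R a i))\<^sup>2 = (\<Sum>i\<in>I. \<Sum>j\<in>I. (c i * c j) * (a i \<bullet> a j))"
  apply (simp add: power2_norm_eq_inner inner_sum_left inner_sum_right sum_distrib_left mult.assoc)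
  apply (subst sum.swap)
  apply (simp add: inner_commute mult.left_commute)
  done

lemma mg_sq:
  fixes a :: "nat \<Rightarrow> 'a::real_inner"
  shows "(norm (minibatch_grad n V a))\<^sup>2 = (\<Sum>i<n. \<Sum>j<n. (V i * V j) * (a i \<bullet> a j)) / (real n)\<^sup>2"
  unfolding minibatch_grad_def
  by (simp add: norm_sq_sum power_mult_distrib power_divide)

lemma E_formula:
  fixes a :: "nat \<Rightarrow> 'a::real_inner"
  assumes mom: "\<And>i j. i<n \<Longrightarrow> j<n \<Longrightarrow> (\<Sum>\<omega>\<in>\<Omega>. w \<omega> * (v \<omega> i * v \<omega> j)) = \<beta> + (if i = j then \<gamma> i else 0)"
  shows "(\<Sum>\<omega>\<in>\<Omega>. w \<omega> * (norm (minibatch_grad n (v \<omega>) a))\<^sup>2)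
     = \<beta> * (norm (minibatch_grad n (\<lambda>_. 1) a))\<^sup>2 + (1/(real n)\<^sup>2) * (\<Sum>i<n. \<gamma> i * (norm (a i))\<^sup>2)"
proof -
  have "(\<Sum>\<omega>\<in>\<Omega>. w \<omega> * (norm (minibatch_grad n (v \<omega>) a))\<^sup>2)
     = (\<Sum>\<omega>\<in>\<Omega>. \<Sum>i<n. \<Sum>j<n. w \<omega> * (v \<omega> i * v \<omega> j) * (a i \<bullet> a j)) / (real n)\<^sup>2"
    by (simp add: mg_sq sum_divide_distrib sum_distrib_left mult.assoc)
  also have "(\<Sum>\<omega>\<in>\<Omega>. \<Sum>i<n. \<Sum>j<n. w \<omega> * (v \<omega> i * v \<omega> j) * (a i \<bullet> a j))
     = (\<Sum>i<n. \<Sum>j<n. \<Sum>\<omega>\<in>\<Omega>. w \<omega> * (v \<omega> i * v \<omega> j) * (a i \<bullet> a j))"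
    by (simp add: sum.swap[where A=\<Omega>])
  also have "\<dots> = (\<Sum>i<n. \<Sum>j<n. (\<beta> + (if i = j then \<gamma> i else 0)) * (a i \<bullet> a j))"
    by (intro sum.cong refl) (simp add: mom[symmetric] sum_distrib_right)
  also have "\<dots> = \<beta> * (\<Sum>i<n. \<Sum>j<n. (a i \<bullet> a j)) + (\<Sum>i<n. \<gamma> i * (a i \<bullet> a i))"
  proof -
    have "\<And>i j. (\<beta> + (if i = j then \<gamma> i else 0)) * (a i \<bullet> a j) = \<beta> * (a i \<bullet> a j) + (if i = j then \<gamma> i * (a i \<bullet> a j) else 0)"
      by (simp add: distrib_right)
    then show ?thesis by (simp add: sum.distrib sum_distrib_left)
  qed
  finally have *: "(\<Sum>\<omega>\<in>\<Omega>. w \<omega> * (norm (minibatch_grad n (v \<omega>) a))\<^sup>2) = (\<beta> * (\<Sum>i<n. \<Sum>j<n. a i \<bullet> a j) + (\<Sum>i<n. \<gamma> i * (a i \<bullet> a i))) / (real n)\<^sup>2" .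
  have **: "(norm (minibatch_grad n (\<lambda>_. 1) a))\<^sup>2 = (\<Sum>i<n. \<Sum>j<n. a i \<bullet> a j) / (real n)\<^sup>2"
    using mg_sq[of n "\<lambda>_. 1" a] by simp
  show ?thesis unfolding * ** by (simp add: add_divide_distrib power2_norm_eq_inner)
qed



lemma smooth_grad_bound:
  fixes F :: "'a::euclidean_space \<Rightarrow> real"
  assumes lb: "\<And>y. m \<le> F y"
    and sm: "\<And>y. F y \<le> F x + g \<bullet> (y - x) + L / 2 * (norm (y - x))\<^sup>2"
  shows "(norm g)\<^sup>2 \<le> 2 * L * (F x - m)"
proof (cases "L > 0")
  case True
  have "m \<le> F (x - (1/L) *\<^sub>R g)" by (rule lb)
  also have "\<dots> \<le> F x + g \<bullet> (- ((1/L) *\<^sub>R g)) + L / 2 * (norm (- ((1/L) *\<^sub>R g)))\<^sup>2"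
    using sm[of "x - (1/L) *\<^sub>R g"] by simp
  also have "\<dots> = F x - (norm g)\<^sup>2 / (2 * L)"
    using True by (simp add: power2_norm_eq_inner power2_eq_square field_simps inner_commute)
      (metis norm_eq_sqrt_inner real_sqrt_mult_self power2_eq_square power2_norm_eq_inner)
  finally have "(norm g)\<^sup>2 / (2 * L) \<le> F x - m" by simp
  then show ?thesis using True by (simp add: field_simps)
next
  case False
  have sm0: "F y \<le> F x + g \<bullet> (y - x)" for y
  proof -
    have "L / 2 * (norm (y - x))\<^sup>2 \<le> 0" using False by (simp add: mult_nonpos_nonneg)
    then show ?thesis using sm[of y] by linarith
  qed
  have g0: "g = 0"
  proof (rule ccontr)
    assume "g \<noteq> 0"
    then have ng: "(norm g)\<^sup>2 > 0" by simp
    define t where "t = (F x - m + 1) / (norm g)\<^sup>2"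
    have "m \<le> F (x - t *\<^sub>R g)" by (rule lb)
    also have "\<dots> \<le> F x + g \<bullet> (- (t *\<^sub>R g))" using sm0[of "x - t *\<^sub>R g"] by simp
    also have "\<dots> = F x - t * (norm g)\<^sup>2" by (simp add: power2_norm_eq_inner)
    also have "\<dots> = m - 1" using ng unfolding t_def by simp
    finally show False by simp
  qed
  have "L = 0"
  proof (rule ccontr)
    assume "L \<noteq> 0"
    then have Ln: "L < 0" using False by simp
    obtain b :: 'a where b: "b \<in> Basis" using nonempty_Basis by blast
    have nb: "norm b = 1" using b by simp
    have pos: "2 * (F x - m + 1) / (- L) \<ge> 0" using Ln lb[of x] by (simp add: divide_nonneg_neg)
    define s where "s = sqrt (2 * (F x - m + 1) / (- L))"
    have s2: "s\<^sup>2 = 2 * (F x - m + 1) / (- L)" unfolding s_def using pos by simp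
    have "m \<le> F (x + s *\<^sub>R b)" by (rule lb)
    also have "\<dots> \<le> F x + L / 2 * s\<^sup>2" using sm[of "x + s *\<^sub>R b"] g0 nb by simp
    also have "\<dots> = m - 1" using Ln unfolding s2 by (simp add: field_simps)
    finally show False by simp
  qed
  then show ?thesis using g0 by simp
qed



lemma mom_indep:
  fixes p :: "nat \<Rightarrow> real"
  assumes p: "\<forall>i<n. 0 < p i \<and> p i \<le> 1" and i: "i < n" and j: "j < n"
  shows "(\<Sum>S\<in>Pow {..<n}. (\<Prod>k<n. if k \<in> S then p k else 1 - p k) *
           ((if i \<in> S then 1 else 0) / p i * ((if j \<in> S then 1 else 0) / p j)))
         = 1 + (if i = j then 1 / p i - 1 else 0)"
proof -
  define A where "A = {..<n}"
  define g where "g k = (if k \<in> {i, j} then 0 else 1 - p k)" for k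
  have fA: "finite A" unfolding A_def by simp
  have ij: "i \<in> A" "j \<in> A" using i j unfolding A_def by auto
  have pi: "p i > 0" and pj: "p j > 0" using p i j by auto
  have summand: "(\<Prod>k\<in>A. if k \<in> S then p k else 1 - p k) *
           ((if i \<in> S then 1 else 0) / p i * ((if j \<in> S then 1 else 0) / p j))
       = ((\<Prod>k\<in>S. p k) * (\<Prod>k\<in>A - S. g k)) / (p i * p j)" if S: "S \<subseteq> A" for S
  proof -
    have fS: "finite S" using S fA finite_subset by blast
    have e1: "(\<Prod>k\<in>A. if k \<in> S then p k else 1 - p k) = (\<Prod>k\<in>S. p k) * (\<Prod>k\<in>A - S. 1 - p k)"
    proof -
      have "(\<Prod>k\<in>A. if k \<in> S then p k else 1 - p k)
          = (\<Prod>k\<in>A \<inter> {k. k \<in> S}. p k) * (\<Prod>k\<in>A \<inter> - {k. k \<in> S}. 1 - p k)"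
        by (rule prod.If_cases[OF fA])
      moreover have "A \<inter> {k. k \<in> S} = S" using S by auto
      moreover have "A \<inter> - {k. k \<in> S} = A - S" by auto
      ultimately show ?thesis by simp
    qed
    show ?thesis
    proof (cases "i \<in> S \<and> j \<in> S")
      case True
      have "(\<Prod>k\<in>A - S. g k) = (\<Prod>k\<in>A - S. 1 - p k)"
        using True by (intro prod.cong) (auto simp: g_def)
      then show ?thesis using True e1 by simp
    next
      case False
      then obtain k where k: "k \<in> A - S" "k \<in> {i, j}" using ij by auto
      have "(\<Prod>k\<in>A - S. g k) = 0"
        using k fA by (subst prod_zero_iff) (auto simp: g_def)
      then show ?thesis using False by auto
    qed
  qed
  have "(\<Sum>S\<in>Pow A. (\<Prod>k\<in>A. if k \<in> S then p k else 1 - p k) *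
           ((if i \<in> S then 1 else 0) / p i * ((if j \<in> S then 1 else 0) / p j)))
      = (\<Sum>S\<in>Pow A. (\<Prod>k\<in>S. p k) * (\<Prod>k\<in>A - S. g k)) / (p i * p j)"
    unfolding sum_divide_distrib by (intro sum.cong refl summand) auto
  also have "(\<Sum>S\<in>Pow A. (\<Prod>k\<in>S. p k) * (\<Prod>k\<in>A - S. g k)) = (\<Prod>k\<in>A. p k + g k)"
    by (rule prod_add[OF fA, symmetric])
  also have "(\<Prod>k\<in>A. p k + g k) = (\<Prod>k\<in>A. if k \<in> {i, j} then p k else 1)"
    by (intro prod.cong) (auto simp: g_def)
  also have "\<dots> = (\<Prod>k\<in>A \<inter> {k. k \<in> {i, j}}. p k) * (\<Prod>k\<in>A \<inter> - {k. k \<in> {i, j}}. 1)"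
    by (rule prod.If_cases[OF fA])
  also have "A \<inter> {k. k \<in> {i, j}} = {i, j}" using ij by auto
  finally show ?thesis
    unfolding A_def using pi pj by (cases "i = j") (auto simp: field_simps)
qed



lemma card_supsets:
  assumes fA: "finite A" and KA: "K \<subseteq> A" and Kk: "card K \<le> k"
  shows "card {S. S \<subseteq> A \<and> card S = k \<and> K \<subseteq> S} = (card A - card K) choose (k - card K)"
proof -
  have fK: "finite K" using KA fA finite_subset by blast
  let ?T = "{T. T \<subseteq> A - K \<and> card T = k - card K}"
  have eq: "{S. S \<subseteq> A \<and> card S = k \<and> K \<subseteq> S} = (\<lambda>T. T \<union> K) ` ?T"
  proof (rule set_eqI, rule iffI)
    fix S assume "S \<in> {S. S \<subseteq> A \<and> card S = k \<and> K \<subseteq> S}"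
    then have S: "S \<subseteq> A" "card S = k" "K \<subseteq> S" by auto
    have "finite S" using S fA finite_subset by blast
    then have "card (S - K) = k - card K" using S card_Diff_subset[OF fK S(3)] by simp
    moreover have "S = (S - K) \<union> K" using S by auto
    ultimately show "S \<in> (\<lambda>T. T \<union> K) ` ?T" using S by (intro image_eqI[of _ _ "S - K"]) auto
  next
    fix S assume "S \<in> (\<lambda>T. T \<union> K) ` ?T"
    then obtain T where T: "T \<subseteq> A - K" "card T = k - card K" and S: "S = T \<union> K" by auto
    have fT: "finite T" using T fA finite_subset by blast
    have "card S = card T + card K" unfolding S using T fT fK by (intro card_Un_disjoint) auto
    then show "S \<in> {S. S \<subseteq> A \<and> card S = k \<and> K \<subseteq> S}" using S T KA Kk by auto
  qed
  have inj: "inj_on (\<lambda>T. T \<union> K) ?T"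
  proof (rule inj_onI)
    fix T1 T2 assume "T1 \<in> ?T" "T2 \<in> ?T" "T1 \<union> K = T2 \<union> K"
    then show "T1 = T2" by blast
  qed
  have "card {S. S \<subseteq> A \<and> card S = k \<and> K \<subseteq> S} = card ?T"
    unfolding eq by (rule card_image[OF inj])
  also have "\<dots> = card (A - K) choose (k - card K)"
    using fA by (intro n_subsets) simp
  also have "card (A - K) = card A - card K" using card_Diff_subset[OF fK KA] .
  finally show ?thesis .
qed



lemma mom_nice:
  assumes n2: "n \<ge> 2" and t1: "1 \<le> \<tau>" and tn: "\<tau> \<le> n" and i: "i < n" and j: "j < n"
  shows "(\<Sum>S\<in>{S. S \<subseteq> {..<n} \<and> card S = \<tau>}. (1 / real (n choose \<tau>)) *
      ((if i \<in> S then 1 else 0) / (real \<tau> / real n) * ((if j \<in> S then 1 else 0) / (real \<tau> / real n))))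
    = real n * (real \<tau> - 1) / (real \<tau> * (real n - 1))
      + (if i = j then real n * (real n - real \<tau>) / (real \<tau> * (real n - 1)) else 0)"
proof -
  define F where "F = {S. S \<subseteq> {..<n} \<and> card S = \<tau>}"
  define c where "c = (1 / real (n choose \<tau>)) * (real n / real \<tau>)\<^sup>2"
  have fF: "finite F" unfolding F_def by (rule finite_subset[of _ "Pow {..<n}"]) auto
  have Cpos: "real (n choose \<tau>) > 0" using tn by simp
  have "(\<Sum>S\<in>F. (1 / real (n choose \<tau>)) *
      ((if i \<in> S then 1 else 0) / (real \<tau> / real n) * ((if j \<in> S then 1 else 0) / (real \<tau> / real n))))
     = (\<Sum>S\<in>F. if {i, j} \<subseteq> S then c else 0)"
    by (intro sum.cong refl) (auto simp: c_def power2_eq_square)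
  also have "\<dots> = (\<Sum>S\<in>{S\<in>F. {i, j} \<subseteq> S}. c)"
    by (rule sum.inter_filter[OF fF, symmetric])
  also have "\<dots> = c * real (card {S. S \<subseteq> {..<n} \<and> card S = \<tau> \<and> {i, j} \<subseteq> S})"
    unfolding F_def by (simp add: conj_assoc)
  finally have main: "(\<Sum>S\<in>F. (1 / real (n choose \<tau>)) *
      ((if i \<in> S then 1 else 0) / (real \<tau> / real n) * ((if j \<in> S then 1 else 0) / (real \<tau> / real n))))
     = c * real (card {S. S \<subseteq> {..<n} \<and> card S = \<tau> \<and> {i, j} \<subseteq> S})" .
  have ab1: "real \<tau> * real (n choose \<tau>) = real n * real ((n - 1) choose (\<tau> - 1))"
  proof -
    have "Suc (\<tau> - 1) * (n choose Suc (\<tau> - 1)) = n * ((n - 1) choose (\<tau> - 1))"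
      by (rule binomial_absorption)
    then have "\<tau> * (n choose \<tau>) = n * ((n - 1) choose (\<tau> - 1))" using t1 by simp
    then show ?thesis by (metis of_nat_mult)
  qed
  show ?thesis
  proof (cases "i = j")
    case True
    have "card {S. S \<subseteq> {..<n} \<and> card S = \<tau> \<and> {i, j} \<subseteq> S} = (n - 1) choose (\<tau> - 1)"
      using card_supsets[of "{..<n}" "{i}" \<tau>] True i t1 by simp
    have n1: "real n - 1 > 0" using n2 by simp
    have tp: "real \<tau> > 0" using t1 by simp
    have np: "real n > 0" using n2 by simp
    have "real ((n - 1) choose (\<tau> - 1)) = real \<tau> * real (n choose \<tau>) / real n"
      using ab1 np by (simp add: field_simps)
    then have L: "c * real ((n - 1) choose (\<tau> - 1)) = real n / real \<tau>"
      unfolding c_def using Cpos tp np by (simp add: field_simps power2_eq_square)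
    have R: "real n * (real \<tau> - 1) / (real \<tau> * (real n - 1)) + real n * (real n - real \<tau>) / (real \<tau> * (real n - 1)) = real n / real \<tau>"
    proof -
      have e: "real n * (real \<tau> - 1) + real n * (real n - real \<tau>) = real n * (real n - 1)"
        by (simp add: algebra_simps)
      have "real n * (real \<tau> - 1) / (real \<tau> * (real n - 1)) + real n * (real n - real \<tau>) / (real \<tau> * (real n - 1))
          = real n * (real n - 1) / (real \<tau> * (real n - 1))"
        unfolding add_divide_distrib[symmetric] e ..
      also have "\<dots> = real n / real \<tau>" using n1 by simp
      finally show ?thesis .
    qed
    show ?thesis unfolding main[unfolded F_def] \<open>card _ = _\<close> if_P[OF True] L R ..
  next
    case False
    show ?thesis
    proof (cases "\<tau> = 1")
      case True
      have "{S. S \<subseteq> {..<n} \<and> card S = \<tau> \<and> {i, j} \<subseteq> S} = {}"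
      proof (rule ccontr)
        assume "{S. S \<subseteq> {..<n} \<and> card S = \<tau> \<and> {i, j} \<subseteq> S} \<noteq> {}"
        then obtain S where S: "S \<subseteq> {..<n}" "card S = \<tau>" "{i, j} \<subseteq> S" by auto
        have "finite S" using S finite_subset by blast
        then have "card {i, j} \<le> card S" using S card_mono by blast
        then show False using False True S by simp
      qed
      then show ?thesis unfolding main[unfolded F_def] using True False by simp
    next
      case t1': False
      have cnt: "card {S. S \<subseteq> {..<n} \<and> card S = \<tau> \<and> {i, j} \<subseteq> S} = (n - 2) choose (\<tau> - 2)"
        using card_supsets[of "{..<n}" "{i, j}" \<tau>] False i j t1 t1' by (simp add: numeral_2_eq_2)
      moreover have ab2: "real (\<tau> - 1) * real ((n - 1) choose (\<tau> - 1)) = real (n - 1) * real ((n - 2) choose (\<tau> - 2))"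
      proof -
        have "Suc (\<tau> - 2) * ((n - 1) choose Suc (\<tau> - 2)) = (n - 1) * ((n - 1 - 1) choose (\<tau> - 2))"
          by (rule binomial_absorption)
        moreover have "Suc (\<tau> - 2) = \<tau> - 1" using t1 t1' by simp
        moreover have "n - 1 - 1 = n - 2" by simp
        ultimately have "(\<tau> - 1) * ((n - 1) choose (\<tau> - 1)) = (n - 1) * ((n - 2) choose (\<tau> - 2))" by simp
        then show ?thesis by (metis of_nat_mult)
      qed
      moreover have "real (\<tau> - 1) = real \<tau> - 1" "real (n - 1) = real n - 1" using t1 n2 by auto
      ultimately have key: "real \<tau> * (real \<tau> - 1) * real (n choose \<tau>) = real n * (real n - 1) * real ((n - 2) choose (\<tau> - 2))"
        using ab1 by (metis mult.assoc mult.commute)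
      have n1: "real n - 1 > 0" using n2 by simp
      have tp: "real \<tau> > 0" using t1 by simp
      have np: "real n > 0" using n2 by simp
      have "real ((n - 2) choose (\<tau> - 2)) = real \<tau> * (real \<tau> - 1) * real (n choose \<tau>) / (real n * (real n - 1))"
        using key np n1 by (simp add: field_simps)
      note X = this
      have L: "c * real ((n - 2) choose (\<tau> - 2)) = real n * (real \<tau> - 1) / (real \<tau> * (real n - 1))"
        unfolding c_def X using Cpos tp np n1 by (simp add: field_simps power2_eq_square)
      show ?thesis unfolding main[unfolded F_def] cnt if_not_P[OF False] L by simp
    qed
  qed
qed



lemma card_as_sum: "finite A \<Longrightarrow> real (card {k\<in>A. P k}) = (\<Sum>k\<in>A. if P k then 1 else 0)"
  by (simp add: sum.inter_filter[symmetric])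

lemma pair_indicator_expect:
  fixes q :: "nat \<Rightarrow> real" and \<tau> k l :: nat
  assumes qs: "(\<Sum>a<n. q a) = 1" and i: "i < n" and j: "j < n" and k: "k < \<tau>" and l: "l < \<tau>"
  shows "(\<Sum>s\<in>{..<\<tau>} \<rightarrow>\<^sub>E {..<n}. (\<Prod>m<\<tau>. q (s m)) * ((if s k = i then 1 else 0) * (if s l = j then 1 else 0)))
       = (if k = l then (if i = j then q i else 0) else q i * q j)"
proof -
  define h where "h m a = q a * ((if m = k then (if a = i then 1 else 0) else 1) * (if m = l then (if a = j then 1 else 0) else 1))" for m a
  have "(\<Prod>m<\<tau>. \<Sum>a<n. h m a) = (\<Sum>s\<in>PiE {..<\<tau>} (\<lambda>_. {..<n}). \<Prod>m<\<tau>. h m (s m))"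
    by (rule prod_sum_PiE) auto
  also have "\<dots> = (\<Sum>s\<in>{..<\<tau>} \<rightarrow>\<^sub>E {..<n}. (\<Prod>m<\<tau>. q (s m)) * ((if s k = i then 1 else 0) * (if s l = j then 1 else 0)))"
  proof (intro sum.cong refl)
    fix s
    have "(\<Prod>m<\<tau>. h m (s m)) = (\<Prod>m<\<tau>. q (s m)) * ((\<Prod>m<\<tau>. if m = k then (if s m = i then 1 else 0) else 1) * (\<Prod>m<\<tau>. if m = l then (if s m = j then 1 else 0) else 1))"
      unfolding h_def prod.distrib ..
    also have "\<dots> = (\<Prod>m<\<tau>. q (s m)) * ((if s k = i then 1 else 0) * (if s l = j then 1 else 0))"
      using k l by (simp add: prod.delta)
    finally show "(\<Prod>m<\<tau>. h m (s m)) = (\<Prod>m<\<tau>. q (s m)) * ((if s k = i then 1 else 0) * (if s l = j then 1 else 0))" .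
  qed
  finally have eq: "(\<Sum>s\<in>{..<\<tau>} \<rightarrow>\<^sub>E {..<n}. (\<Prod>m<\<tau>. q (s m)) * ((if s k = i then 1 else 0) * (if s l = j then 1 else 0)))
      = (\<Prod>m<\<tau>. \<Sum>a<n. h m a)" ..
  have h_alt: "h m a = (if (m = k \<longrightarrow> a = i) \<and> (m = l \<longrightarrow> a = j) then q a else 0)" for m a
    by (simp add: h_def)
  show ?thesis
  proof (cases "k = l")
    case True
    have "(\<Sum>a<n. h m a) = (if m = k then (if i = j then q i else 0) else 1)" for m
      using True i qs by (cases "m = k"; cases "i = j") (auto simp: h_alt intro: sum.neutral)
    then show ?thesis unfolding eq using True k by (simp add: prod.delta)
  next
    case False
    have "(\<Sum>a<n. h m a) = (if m = k then q i else 1) * (if m = l then q j else 1)" for m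
      using False i j qs by (cases "m = k"; cases "m = l") (auto simp: h_alt)
    then show ?thesis unfolding eq using False k l by (simp add: prod.distrib prod.delta)
  qed
qed



lemma double_sum_if:
  fixes X Y :: real
  shows "(\<Sum>k<(t::nat). \<Sum>l<t. if k = l then X else Y) = real t * X + (real t * real t - real t) * Y"
proof -
  have "(\<Sum>l<t. if k = l then X else Y) = real t * Y + (X - Y)" if "k < t" for k
  proof -
    have "(\<Sum>l<t. if k = l then X else Y) = (\<Sum>l<t. Y + (if k = l then X - Y else 0))"
      by (intro sum.cong) auto
    also have "\<dots> = real t * Y + (X - Y)" using that by (simp add: sum.distrib)
    finally show ?thesis .
  qed
  then have "(\<Sum>k<t. \<Sum>l<t. if k = l then X else Y) = (\<Sum>k<t. real t * Y + (X - Y))" by simp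
  also have "\<dots> = real t * X + (real t * real t - real t) * Y" by (simp add: algebra_simps)
  finally show ?thesis .
qed

lemma mom_wr:
  fixes q :: "nat \<Rightarrow> real" and \<tau> n i j :: nat
  assumes t1: "\<tau> \<ge> 1" and qpos: "\<forall>i<n. q i > 0" and qs: "(\<Sum>a<n. q a) = 1" and i: "i < n" and j: "j < n"
  shows "(\<Sum>s\<in>{..<\<tau>} \<rightarrow>\<^sub>E {..<n}. (\<Prod>k<\<tau>. q (s k)) * (wr_v \<tau> q s i * wr_v \<tau> q s j))
     = (1 - 1 / real \<tau>) + (if i = j then 1 / (real \<tau> * q i) else 0)"
proof -
  define D where "D = real \<tau> * q i * (real \<tau> * q j)"
  define X where "X = (if i = j then q i else 0)"
  define Y where "Y = q i * q j"
  have 1: "wr_v \<tau> q s i * wr_v \<tau> q s j = (\<Sum>k<\<tau>. \<Sum>l<\<tau>. (if s k = i then 1 else 0) * (if s l = j then 1 else 0)) / D" for s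
    unfolding wr_v_def D_def card_as_sum[of "{..<\<tau>}", OF finite_lessThan] by (simp add: sum_product)
  have "(\<Sum>s\<in>{..<\<tau>} \<rightarrow>\<^sub>E {..<n}. (\<Prod>k<\<tau>. q (s k)) * (wr_v \<tau> q s i * wr_v \<tau> q s j))
     = (\<Sum>s\<in>{..<\<tau>} \<rightarrow>\<^sub>E {..<n}. \<Sum>k<\<tau>. \<Sum>l<\<tau>. (\<Prod>m<\<tau>. q (s m)) * ((if s k = i then 1 else 0) * (if s l = j then 1 else 0))) / D"
    unfolding 1 by (simp add: sum_divide_distrib sum_distrib_left)
  also have "(\<Sum>s\<in>{..<\<tau>} \<rightarrow>\<^sub>E {..<n}. \<Sum>k<\<tau>. \<Sum>l<\<tau>. (\<Prod>m<\<tau>. q (s m)) * ((if s k = i then 1 else 0) * (if s l = j then 1 else 0)))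
     = (\<Sum>k<\<tau>. \<Sum>l<\<tau>. \<Sum>s\<in>{..<\<tau>} \<rightarrow>\<^sub>E {..<n}. (\<Prod>m<\<tau>. q (s m)) * ((if s k = i then 1 else 0) * (if s l = j then 1 else 0)))"
    by (simp add: sum.swap[where A="{..<\<tau>} \<rightarrow>\<^sub>E {..<n}"])
  also have "\<dots> = (\<Sum>k<\<tau>. \<Sum>l<\<tau>. if k = l then X else Y)"
    unfolding X_def Y_def
    by (intro sum.cong refl pair_indicator_expect[OF qs i j]) auto
  also have "\<dots> = real \<tau> * X + (real \<tau> * real \<tau> - real \<tau>) * Y" by (rule double_sum_if)
  finally have E: "(\<Sum>s\<in>{..<\<tau>} \<rightarrow>\<^sub>E {..<n}. (\<Prod>k<\<tau>. q (s k)) * (wr_v \<tau> q s i * wr_v \<tau> q s j))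
      = (real \<tau> * X + (real \<tau> * real \<tau> - real \<tau>) * Y) / D" .
  have qi: "q i > 0" and qj: "q j > 0" using qpos i j by auto
  have tp: "real \<tau> > 0" using t1 by simp
  show ?thesis
  proof (cases "i = j")
    case True
    show ?thesis unfolding E X_def Y_def D_def using True qi tp
      by (simp add: field_simps power2_eq_square)
  next
    case False
    show ?thesis unfolding E X_def Y_def D_def using False qi qj tp
      by (simp add: field_simps power2_eq_square)
  qed
qed



lemma final_bound:
  fixes a :: "nat \<Rightarrow> 'a::real_inner" and n :: nat
  assumes n: "n > 0"
    and E: "E = \<beta> * N + (1/(real n)\<^sup>2) * (\<Sum>i<n. \<gamma> i * (norm (a i))\<^sup>2)"
    and gam: "\<And>i. i < n \<Longrightarrow> 0 \<le> \<gamma> i"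
    and gA: "\<And>i. i < n \<Longrightarrow> \<gamma> i * Li i / real n \<le> A"
    and ga: "\<And>i. i < n \<Longrightarrow> (norm (a i))\<^sup>2 \<le> 2 * Li i * D i"
    and D: "\<And>i. i < n \<Longrightarrow> 0 \<le> D i"
    and Ds: "(1 / real n) * (\<Sum>i<n. D i) = F - m + \<Delta>"
  shows "E \<le> 2 * A * (F - m) + \<beta> * N + 2 * A * \<Delta>"
proof -
  have np: "real n > 0" using n by simp
  have "(1/(real n)\<^sup>2) * (\<Sum>i<n. \<gamma> i * (norm (a i))\<^sup>2) = (\<Sum>i<n. (1/(real n)\<^sup>2) * (\<gamma> i * (norm (a i))\<^sup>2))"
    by (simp add: sum_distrib_left)
  also have "\<dots> \<le> (\<Sum>i<n. 2 * A * (D i / real n))"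
  proof (rule sum_mono)
    fix i assume "i \<in> {..<n}"
    then have i: "i < n" by simp
    have "(1/(real n)\<^sup>2) * (\<gamma> i * (norm (a i))\<^sup>2) \<le> (1/(real n)\<^sup>2) * (\<gamma> i * (2 * Li i * D i))"
      using gam[OF i] ga[OF i] by (intro mult_left_mono) auto
    also have "\<dots> = 2 * (\<gamma> i * Li i / real n) * (D i / real n)"
      by (simp add: power2_eq_square field_simps)
    also have "\<dots> \<le> 2 * A * (D i / real n)"
      using gA[OF i] D[OF i] np by (intro mult_right_mono) auto
    finally show "(1/(real n)\<^sup>2) * (\<gamma> i * (norm (a i))\<^sup>2) \<le> 2 * A * (D i / real n)" .
  qed
  also have "\<dots> = 2 * A * ((1 / real n) * (\<Sum>i<n. D i))"
    by (simp add: sum_distrib_left sum_divide_distrib)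
  also have "\<dots> = 2 * A * (F - m) + 2 * A * \<Delta>" unfolding Ds by (simp add: algebra_simps)
  finally show ?thesis unfolding E by simp
qed


theorem proposition3:
  fixes n :: nat
    and fi :: "nat \<Rightarrow> 'a::euclidean_space \<Rightarrow> real"
    and Dfi :: "nat \<Rightarrow> 'a \<Rightarrow> 'a"
    and Df :: "'a \<Rightarrow> 'a"
    and L :: real and Li :: "nat \<Rightarrow> real"
    and finf :: real and fiinf :: "nat \<Rightarrow> real"
    and f :: "'a \<Rightarrow> real" and \<Delta>inf :: real
  assumes n_pos: "n \<ge> 1"
    and f_def: "f = (\<lambda>x. (1 / real n) * (\<Sum>i<n. fi i x))"
    and f_grad: "\<And>x. (f has_derivative (\<lambda>h. Df x \<bullet> h)) (at x)"
    and f_lip: "L-lipschitz_on UNIV Df"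
    and f_bdd: "bdd_below (range f)"
    and finf_def: "finf = (INF x. f x)"
    and fi_grad: "\<And>i x. i < n \<Longrightarrow> (fi i has_derivative (\<lambda>h. Dfi i x \<bullet> h)) (at x)"
    and fi_lb: "\<And>i x. i < n \<Longrightarrow> fiinf i \<le> fi i x"
    and fi_smooth: "\<And>i x y. i < n \<Longrightarrow>
        fi i y \<le> fi i x + Dfi i x \<bullet> (y - x) + Li i / 2 * (norm (y - x))\<^sup>2"
    and Delta_def: "\<Delta>inf = (1 / real n) * (\<Sum>i<n. finf - fiinf i)"
  shows
    "(\<forall>(\<tau>::nat) (q::nat \<Rightarrow> real). \<tau> \<ge> 1 \<and> (\<forall>i<n. q i > 0) \<and> (\<Sum>i<n. q i) = 1 \<longrightarrow>
       (let A = Max ((\<lambda>i. Li i / (real \<tau> * real n * q i)) ` {..<n});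
            B = 1 - 1 / real \<tau>;
            C = 2 * A * \<Delta>inf
        in \<forall>x. E_sq_with_replacement n \<tau> q (\<lambda>i. Dfi i x)
               \<le> 2 * A * (f x - finf) + B * (norm (Df x))\<^sup>2 + C))
   \<and> (\<forall>p::nat \<Rightarrow> real. (\<forall>i<n. 0 < p i \<and> p i \<le> 1) \<longrightarrow>
       (let A = Max ((\<lambda>i. (1 - p i) * Li i / (p i * real n)) ` {..<n});
            B = 1;
            C = 2 * A * \<Delta>inf
        in \<forall>x. E_sq_independent n p (\<lambda>i. Dfi i x)
               \<le> 2 * A * (f x - finf) + B * (norm (Df x))\<^sup>2 + C))
   \<and> (\<forall>\<tau>::nat. n \<ge> 2 \<and> 1 \<le> \<tau> \<and> \<tau> \<le> n \<longrightarrow>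
       (let A = (real n - real \<tau>) / (real \<tau> * (real n - 1)) * Max (Li ` {..<n});
            B = real n * (real \<tau> - 1) / (real \<tau> * (real n - 1));
            C = 2 * A * \<Delta>inf
        in \<forall>x. E_sq_nice n \<tau> (\<lambda>i. Dfi i x)
               \<le> 2 * A * (f x - finf) + B * (norm (Df x))\<^sup>2 + C))"
  proof -
  have np: "n > 0" using n_pos by simp
  have Df_eq: "Df x = minibatch_grad n (\<lambda>_. 1) (\<lambda>i. Dfi i x)" for x
  proof -
    define G where "G = minibatch_grad n (\<lambda>_. 1) (\<lambda>i. Dfi i x)"
    have d1: "(f has_derivative (\<lambda>h. (1 / real n) * (\<Sum>i<n. Dfi i x \<bullet> h))) (at x)"
      unfolding f_def
      by (intro has_derivative_mult_right has_derivative_sum fi_grad) auto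
    have "(\<lambda>h. Df x \<bullet> h) = (\<lambda>h. (1 / real n) * (\<Sum>i<n. Dfi i x \<bullet> h))"
      by (rule has_derivative_unique[OF f_grad d1])
    moreover have "G \<bullet> h = (1 / real n) * (\<Sum>i<n. Dfi i x \<bullet> h)" for h
      unfolding G_def minibatch_grad_def by (simp add: inner_sum_left)
    ultimately have "\<And>h. Df x \<bullet> h = G \<bullet> h" by metis
    then have "Df x \<bullet> (Df x - G) = G \<bullet> (Df x - G)" by simp
    then have "(Df x - G) \<bullet> (Df x - G) = 0" by (simp add: inner_diff_left)
    then show ?thesis unfolding G_def by simp
  qed
  have finf_le: "finf \<le> f x" for x
    unfolding finf_def using f_bdd by (intro cINF_lower) auto
  have gb: "(norm (Dfi i x))\<^sup>2 \<le> 2 * Li i * (fi i x - fiinf i)" if "i < n" for i x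
    by (rule smooth_grad_bound[where F="fi i"]) (use that fi_lb fi_smooth in auto)
  have Dnn: "0 \<le> fi i x - fiinf i" if "i < n" for i x using fi_lb[OF that] by simp
  have Ds: "(1 / real n) * (\<Sum>i<n. fi i x - fiinf i) = f x - finf + \<Delta>inf" for x
    using np unfolding Delta_def f_def by (simp add: sum_subtractf field_simps)
  have N: "(norm (minibatch_grad n (\<lambda>_. 1) (\<lambda>i. Dfi i x)))\<^sup>2 = (norm (Df x))\<^sup>2" for x
    using Df_eq by simp
  have P1: "\<forall>(\<tau>::nat) (q::nat \<Rightarrow> real). \<tau> \<ge> 1 \<and> (\<forall>i<n. q i > 0) \<and> (\<Sum>i<n. q i) = 1 \<longrightarrow>
       (let A = Max ((\<lambda>i. Li i / (real \<tau> * real n * q i)) ` {..<n});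
            B = 1 - 1 / real \<tau>;
            C = 2 * A * \<Delta>inf
        in \<forall>x. E_sq_with_replacement n \<tau> q (\<lambda>i. Dfi i x)
               \<le> 2 * A * (f x - finf) + B * (norm (Df x))\<^sup>2 + C)"
  proof (intro allI impI)
    fix \<tau> :: nat and q :: "nat \<Rightarrow> real"
    assume H: "\<tau> \<ge> 1 \<and> (\<forall>i<n. q i > 0) \<and> (\<Sum>i<n. q i) = 1"
    define A where "A = Max ((\<lambda>i. Li i / (real \<tau> * real n * q i)) ` {..<n})"
    have "E_sq_with_replacement n \<tau> q (\<lambda>i. Dfi i x)
               \<le> 2 * A * (f x - finf) + (1 - 1 / real \<tau>) * (norm (Df x))\<^sup>2 + 2 * A * \<Delta>inf" for x
    proof (rule final_bound[OF np _ _ _ gb Dnn Ds])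
      show "E_sq_with_replacement n \<tau> q (\<lambda>i. Dfi i x) = (1 - 1 / real \<tau>) * (norm (Df x))\<^sup>2
          + (1/(real n)\<^sup>2) * (\<Sum>i<n. (1 / (real \<tau> * q i)) * (norm (Dfi i x))\<^sup>2)"
        unfolding E_sq_with_replacement_def N[symmetric]
        by (rule E_formula[where w="\<lambda>s. \<Prod>k<\<tau>. q (s k)" and v="wr_v \<tau> q"])
           (rule mom_wr; use H in auto)
    next
      fix i assume i: "i < n"
      then have qi: "q i > 0" using H by auto
      then show "0 \<le> 1 / (real \<tau> * q i)" by simp
      have "1 / (real \<tau> * q i) * Li i / real n = Li i / (real \<tau> * real n * q i)"
        by (simp add: field_simps)
      also have "\<dots> \<le> A" unfolding A_def using i by (intro Max_ge) auto
      finally show "1 / (real \<tau> * q i) * Li i / real n \<le> A" .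
    qed
    then show "let A = Max ((\<lambda>i. Li i / (real \<tau> * real n * q i)) ` {..<n});
            B = 1 - 1 / real \<tau>;
            C = 2 * A * \<Delta>inf
        in \<forall>x. E_sq_with_replacement n \<tau> q (\<lambda>i. Dfi i x)
               \<le> 2 * A * (f x - finf) + B * (norm (Df x))\<^sup>2 + C"
      unfolding Let_def A_def[symmetric] by blast
  qed
  have P2: "\<forall>p::nat \<Rightarrow> real. (\<forall>i<n. 0 < p i \<and> p i \<le> 1) \<longrightarrow>
       (let A = Max ((\<lambda>i. (1 - p i) * Li i / (p i * real n)) ` {..<n});
            B = 1;
            C = 2 * A * \<Delta>inf
        in \<forall>x. E_sq_independent n p (\<lambda>i. Dfi i x)
               \<le> 2 * A * (f x - finf) + B * (norm (Df x))\<^sup>2 + C)"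
  proof (intro allI impI)
    fix p :: "nat \<Rightarrow> real"
    assume H: "\<forall>i<n. 0 < p i \<and> p i \<le> 1"
    define A where "A = Max ((\<lambda>i. (1 - p i) * Li i / (p i * real n)) ` {..<n})"
    have "E_sq_independent n p (\<lambda>i. Dfi i x)
               \<le> 2 * A * (f x - finf) + 1 * (norm (Df x))\<^sup>2 + 2 * A * \<Delta>inf" for x
    proof (rule final_bound[OF np _ _ _ gb Dnn Ds])
      show "E_sq_independent n p (\<lambda>i. Dfi i x) = 1 * (norm (Df x))\<^sup>2
          + (1/(real n)\<^sup>2) * (\<Sum>i<n. (1 / p i - 1) * (norm (Dfi i x))\<^sup>2)"
        unfolding E_sq_independent_def N[symmetric]
        by (rule E_formula[where w="\<lambda>S. \<Prod>i<n. if i \<in> S then p i else 1 - p i"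
              and v="\<lambda>S i. (if i \<in> S then 1 else 0) / p i"])
           (rule mom_indep; use H in auto)
    next
      fix i assume i: "i < n"
      then have pi: "p i > 0" "p i \<le> 1" using H by auto
      then show "0 \<le> 1 / p i - 1" by simp
      have "(1 / p i - 1) * Li i / real n = (1 - p i) * Li i / (p i * real n)"
        using pi by (simp add: field_simps)
      also have "\<dots> \<le> A" unfolding A_def using i by (intro Max_ge) auto
      finally show "(1 / p i - 1) * Li i / real n \<le> A" .
    qed
    then show "let A = Max ((\<lambda>i. (1 - p i) * Li i / (p i * real n)) ` {..<n});
            B = 1;
            C = 2 * A * \<Delta>inf
        in \<forall>x. E_sq_independent n p (\<lambda>i. Dfi i x)
               \<le> 2 * A * (f x - finf) + B * (norm (Df x))\<^sup>2 + C"
      unfolding Let_def A_def[symmetric] by blast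
  qed
  have P3: "\<forall>\<tau>::nat. n \<ge> 2 \<and> 1 \<le> \<tau> \<and> \<tau> \<le> n \<longrightarrow>
       (let A = (real n - real \<tau>) / (real \<tau> * (real n - 1)) * Max (Li ` {..<n});
            B = real n * (real \<tau> - 1) / (real \<tau> * (real n - 1));
            C = 2 * A * \<Delta>inf
        in \<forall>x. E_sq_nice n \<tau> (\<lambda>i. Dfi i x)
               \<le> 2 * A * (f x - finf) + B * (norm (Df x))\<^sup>2 + C)"
  proof (intro allI impI)
    fix \<tau> :: nat
    assume H: "n \<ge> 2 \<and> 1 \<le> \<tau> \<and> \<tau> \<le> n"
    define A where "A = (real n - real \<tau>) / (real \<tau> * (real n - 1)) * Max (Li ` {..<n})"
    define B where "B = real n * (real \<tau> - 1) / (real \<tau> * (real n - 1))"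
    define \<gamma> where "\<gamma> = real n * (real n - real \<tau>) / (real \<tau> * (real n - 1))"
    have n1: "real n - 1 > 0" and tp: "real \<tau> > 0" and nt: "real n - real \<tau> \<ge> 0" using H by auto
    have "E_sq_nice n \<tau> (\<lambda>i. Dfi i x)
               \<le> 2 * A * (f x - finf) + B * (norm (Df x))\<^sup>2 + 2 * A * \<Delta>inf" for x
    proof (rule final_bound[OF np _ _ _ gb Dnn Ds])
      show "E_sq_nice n \<tau> (\<lambda>i. Dfi i x) = B * (norm (Df x))\<^sup>2
          + (1/(real n)\<^sup>2) * (\<Sum>i<n. (\<lambda>_. \<gamma>) i * (norm (Dfi i x))\<^sup>2)"
        unfolding E_sq_nice_def N[symmetric] B_def \<gamma>_def
        by (rule E_formula[where w="\<lambda>S. 1 / real (n choose \<tau>)"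
              and v="\<lambda>S i. (if i \<in> S then 1 else 0) / (real \<tau> / real n)"])
           (rule mom_nice; use H in auto)
    next
      fix i assume i: "i < n"
      show "0 \<le> (\<lambda>_. \<gamma>) i" unfolding \<gamma>_def using n1 tp nt by simp
      have "(\<lambda>_. \<gamma>) i * Li i / real n = (real n - real \<tau>) / (real \<tau> * (real n - 1)) * Li i"
        unfolding \<gamma>_def using np n1 tp by (simp add: field_simps)
      also have "\<dots> \<le> A" unfolding A_def using i n1 tp nt
        by (intro mult_left_mono Max_ge) auto
      finally show "(\<lambda>_. \<gamma>) i * Li i / real n \<le> A" .
    qed
    then show "let A = (real n - real \<tau>) / (real \<tau> * (real n - 1)) * Max (Li ` {..<n});
            B = real n * (real \<tau> - 1) / (real \<tau> * (real n - 1));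
            C = 2 * A * \<Delta>inf
        in \<forall>x. E_sq_nice n \<tau> (\<lambda>i. Dfi i x)
               \<le> 2 * A * (f x - finf) + B * (norm (Df x))\<^sup>2 + C"
      unfolding Let_def A_def[symmetric] B_def[symmetric] by blast
  qed
  show ?thesis using P1 P2 P3 by blast
qed

end
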